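(* Let $g\in\mathrm{PLA}$ with PLA coefficients $\hat g(n)$, $n\ge0$, and let $t\in\mathbb{T}$ be such that $g^*(t)=A<\infty$. Then the power series $G(z)=\sum_{n\ge0}\hat g(n)z^n$ converges for $|z|<1$ and $|G(z)|\le 3A$ for all $z\in Q_t$ with $|z|<1$.
   Context: $\mathrm{PLA}$ is the set of measurable $g$ on $\mathbb{T}=\mathbb{R}/2\pi\mathbb{Z}$ for which there exist complex numbers $c(n)$, $n\ge0$, with $\sum_{0\le n<N}c(n)e^{int}\to g(t)$ for a.e. $t$; these coefficients are unique and are denoted $\hat g(n)$. Define $g^*(t)=\sup_N\left|\sum_{0\le n<N}\hat g(n)e^{int}\right|$, $G(z)=\sum_{n\ge0}\hat g(n)z^n$, and the Privalov cone $Q_t=\mathrm{conv}\big(\{e^{it}\}\cup\{z\in\mathbb{C}:|z|<\tfrac12\}\big)$ (closed convex hull as a subset of the closed unit disc). *)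

theory Defs
  imports "HOL-Analysis.Analysis"
begin

text \<open>Functions on the circle T = R/2piZ are modelled as 2pi-periodic functions real => complex.\<close>

definition pla_partial :: "(nat \<Rightarrow> complex) \<Rightarrow> nat \<Rightarrow> real \<Rightarrow> complex" where
  "pla_partial c N t = (\<Sum>n<N. c n * exp (\<i> * of_nat n * of_real t))"

definition is_pla_coeffs :: "(real \<Rightarrow> complex) \<Rightarrow> (nat \<Rightarrow> complex) \<Rightarrow> bool" where
  "is_pla_coeffs g c \<longleftrightarrow>
     (AE t in lebesgue. (\<lambda>N. pla_partial c N t) \<longlonglongrightarrow> g t)"

definition PLA :: "(real \<Rightarrow> complex) set" where
  "PLA = {g. g \<in> borel_measurable lebesgue \<and> (\<forall>t. g (t + 2 * pi) = g t)
             \<and> (\<exists>c. is_pla_coeffs g c)}"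

definition pla_hat :: "(real \<Rightarrow> complex) \<Rightarrow> nat \<Rightarrow> complex" where
  "pla_hat g = (THE c. is_pla_coeffs g c)"

definition pla_max :: "(nat \<Rightarrow> complex) \<Rightarrow> real \<Rightarrow> ereal" where
  "pla_max c t = (SUP N. ereal (norm (pla_partial c N t)))"

definition pla_star :: "(real \<Rightarrow> complex) \<Rightarrow> real \<Rightarrow> ereal" where
  "pla_star g t = pla_max (pla_hat g) t"

definition privalov_cone :: "real \<Rightarrow> complex set" where
  "privalov_cone t = closure (convex hull (insert (cis t) (ball 0 (1/2))))"

end

theory Submission
  imports Defs
begin

lemma abel_id:
  fixes a :: "nat \<Rightarrow> complex" and w :: complex
  shows "(\<Sum>n<N. a n * w^n) = (1-w) * (\<Sum>n<N. (\<Sum>k<Suc n. a k) * w^n) + (\<Sum>k<N. a k) * w^N"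
  by (induction N) (simp_all add: algebra_simps)

lemma abel_bound:
  fixes a :: "nat \<Rightarrow> complex" and w L :: complex
  assumes sb: "\<And>N. norm (\<Sum>k<N. a k) \<le> A" and w: "norm w < 1"
    and lim: "(\<lambda>N. \<Sum>n<N. a n * w^n) \<longlonglongrightarrow> L"
  shows "norm L \<le> norm (1-w) * A / (1 - norm w)"
proof -
  have A0: "0 \<le> A" using sb[of 0] by simp
  have fin: "norm (\<Sum>n<N. a n * w^n) \<le> norm (1-w) * A / (1 - norm w) + A * norm w ^ N" for N
  proof -
    define S where "S = (\<Sum>n<N. (\<Sum>k<Suc n. a k) * w^n)"
    have "norm S \<le> (\<Sum>n<N. A * norm w ^ n)"
      unfolding S_def
    proof (intro sum_norm_le)
      fix n show "norm ((\<Sum>k<Suc n. a k) * w^n) \<le> A * norm w ^ n"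
        unfolding norm_mult norm_power by (intro mult_right_mono sb) simp
    qed
    also have "\<dots> = A * (\<Sum>n<N. norm w ^ n)" by (simp add: sum_distrib_left)
    also have "(\<Sum>n<N. norm w ^ n) = (1 - norm w ^ N) / (1 - norm w)"
      using w by (simp add: sum_gp_strict)
    finally have h0: "norm S \<le> A * ((1 - norm w ^ N) / (1 - norm w))" .
    have "(1 - norm w ^ N) / (1 - norm w) \<le> 1 / (1 - norm w)"
      using w by (intro divide_right_mono) auto
    then have h: "norm S \<le> A * (1 / (1 - norm w))"
      using h0 mult_left_mono[OF _ A0] by (meson order_trans)
    have "norm ((1-w) * S + (\<Sum>k<N. a k) * w^N) \<le> norm ((1-w) * S) + norm ((\<Sum>k<N. a k) * w^N)"
      by (rule norm_triangle_ineq)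
    also have "\<dots> = norm (1-w) * norm S + norm (\<Sum>k<N. a k) * norm w ^ N"
      by (simp only: norm_mult norm_power)
    also have "\<dots> \<le> norm (1-w) * (A * (1 / (1 - norm w))) + A * norm w ^ N"
      by (intro add_mono mult_left_mono mult_right_mono h sb) auto
    finally show ?thesis unfolding abel_id[of a w N] S_def by simp
  qed
  have l2: "(\<lambda>N. norm (1-w) * A / (1 - norm w) + A * norm w ^ N) \<longlonglongrightarrow> norm (1-w) * A / (1 - norm w) + A * 0"
    by (intro tendsto_intros LIMSEQ_power_zero) (use w in simp)
  have "norm L \<le> norm (1-w) * A / (1 - norm w) + A * 0"
    by (rule tendsto_le[OF _ l2 tendsto_norm[OF lim]]) (simp_all add: fin always_eventually)
  then show ?thesis by simp
qed

lemma cone_sub: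
  "privalov_cone t \<subseteq> {z. norm (cis t - z) \<le> 3 * (1 - norm z)}"
proof -
  let ?S = "{z. norm (cis t - z) \<le> 3 * (1 - norm z)}"
  have cl: "closed ?S"
    by (intro closed_Collect_le continuous_intros)
  have cv: "convex ?S"
  proof (rule convexI)
    fix x y :: complex and u v :: real
    assume x': "x \<in> ?S" and y': "y \<in> ?S"
      and u: "0 \<le> u" and v: "0 \<le> v" and uv: "u + v = 1"
    from x' have x: "norm (cis t - x) \<le> 3 * (1 - norm x)" by simp
    from y' have y: "norm (cis t - y) \<le> 3 * (1 - norm y)" by simp
    have e: "cis t - (u *\<^sub>R x + v *\<^sub>R y) = u *\<^sub>R (cis t - x) + v *\<^sub>R (cis t - y)"
      using uv by (simp add: algebra_simps flip: scaleR_add_left)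
    have n1: "norm (cis t - (u *\<^sub>R x + v *\<^sub>R y)) \<le> u * norm (cis t - x) + v * norm (cis t - y)"
      unfolding e using u v norm_triangle_ineq[of "u *\<^sub>R (cis t - x)" "v *\<^sub>R (cis t - y)"] by simp
    have n2: "norm (u *\<^sub>R x + v *\<^sub>R y) \<le> u * norm x + v * norm y"
      using u v norm_triangle_ineq[of "u *\<^sub>R x" "v *\<^sub>R y"] by simp
    have "u * norm (cis t - x) + v * norm (cis t - y) \<le> u * (3 * (1 - norm x)) + v * (3 * (1 - norm y))"
      by (intro add_mono mult_left_mono x y u v)
    then have "norm (cis t - (u *\<^sub>R x + v *\<^sub>R y)) \<le> 3 * (1 - norm (u *\<^sub>R x + v *\<^sub>R y))"
      using n1 n2 uv by (simp add: algebra_simps)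
    then show "u *\<^sub>R x + v *\<^sub>R y \<in> ?S" by simp
  qed
  have ins: "insert (cis t) (ball 0 (1/2)) \<subseteq> ?S"
  proof
    fix z assume "z \<in> insert (cis t) (ball 0 (1/2))"
    then show "z \<in> ?S"
    proof
      assume "z = cis t" then show ?thesis by simp
    next
      assume "z \<in> ball 0 (1/2)"
      then have "norm z < 1/2" by simp
      moreover have "norm (cis t - z) \<le> 1 + norm z"
        using norm_triangle_ineq4[of "cis t" z] by simp
      ultimately show ?thesis by simp
    qed
  qed
  have "convex hull (insert (cis t) (ball 0 (1/2))) \<subseteq> ?S"
    using ins cv by (rule hull_minimal)
  then show ?thesis unfolding privalov_cone_def
    by (rule closure_minimal[OF _ cl])
qed

theorem lemma1:
  fixes g :: "real \<Rightarrow> complex" and c :: "nat \<Rightarrow> complex" and t A :: real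
  assumes "g \<in> PLA"
    and "is_pla_coeffs g c"
    and "pla_max c t = ereal A"
  shows "(\<forall>z::complex. norm z < 1 \<longrightarrow> summable (\<lambda>n. c n * z ^ n))
       \<and> (\<forall>z\<in>privalov_cone t. norm z < 1 \<longrightarrow>
            norm (\<Sum>n. c n * z ^ n) \<le> 3 * A)"
proof -
  define a where "a n = c n * exp (\<i> * of_nat n * of_real t)" for n
  have sN: "norm (\<Sum>k<N. a k) \<le> A" for N
  proof -
    have "ereal (norm (pla_partial c N t)) \<le> pla_max c t"
      unfolding pla_max_def by (rule SUP_upper) simp
    then show ?thesis using assms(3) by (simp add: pla_partial_def a_def)
  qed
  have ne1: "norm (exp (\<i> * of_nat n * of_real t)) = 1" for n
    by (simp add: norm_exp_eq_Re)
  have cb: "norm (c n) \<le> 2 * A" for n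
  proof -
    have "norm (a n) = norm ((\<Sum>k<Suc n. a k) - (\<Sum>k<n. a k))" by simp
    then have "norm (a n) \<le> A + A"
      using norm_triangle_ineq4[of "\<Sum>k<Suc n. a k" "\<Sum>k<n. a k"] sN[of n] sN[of "Suc n"] by linarith
    moreover have "norm (a n) = norm (c n)" by (simp add: a_def norm_mult ne1)
    ultimately show ?thesis by simp
  qed
  have summ: "summable (\<lambda>n. c n * z ^ n)" if z: "norm z < 1" for z :: complex
  proof (rule summable_comparison_test')
    show "summable (\<lambda>n. 2 * A * norm z ^ n)"
      by (intro summable_mult summable_geometric) (use z in auto)
    show "norm (c n * z ^ n) \<le> 2 * A * norm z ^ n" for n
      by (simp add: norm_mult norm_power mult_right_mono cb)
  qed
  have bound: "norm (\<Sum>n. c n * z ^ n) \<le> 3 * A"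
    if zc: "z \<in> privalov_cone t" and z: "norm z < 1" for z
  proof -
    define w where "w = z * exp (- \<i> * of_real t)"
    have en: "norm (exp (- \<i> * of_real t)) = 1"
      by (simp add: norm_exp_eq_Re)
    have nw: "norm w = norm z" by (simp add: w_def norm_mult en)
    have trm: "a n * w ^ n = c n * z ^ n" for n
    proof -
      have "exp (\<i> * of_nat n * of_real t) * exp (- \<i> * of_real t) ^ n = 1"
        by (simp add: exp_of_nat_mult[symmetric] exp_add[symmetric] algebra_simps
             flip: exp_add)
      then show ?thesis unfolding a_def w_def by (simp add: power_mult_distrib algebra_simps)
    qed
    have lim: "(\<lambda>N. \<Sum>n<N. a n * w^n) \<longlonglongrightarrow> (\<Sum>n. c n * z ^ n)"
      unfolding trm using summable_LIMSEQ[OF summ[OF z]] .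
    have b1: "norm (\<Sum>n. c n * z ^ n) \<le> norm (1-w) * A / (1 - norm w)"
      by (rule abel_bound[OF sN _ lim]) (use nw z in simp)
    have "1 - w = exp (- \<i> * of_real t) * (cis t - z)"
      by (simp add: w_def cis_conv_exp algebra_simps flip: exp_add)
    then have n1w: "norm (1 - w) = norm (cis t - z)" by (simp add: norm_mult en)
    have "norm (cis t - z) \<le> 3 * (1 - norm z)" using cone_sub zc by blast
    moreover have A0: "0 \<le> A" using sN[of 0] by simp
    ultimately have "norm (1-w) * A \<le> (3 * (1 - norm w)) * A"
      using n1w nw by (intro mult_right_mono) auto
    then have "norm (1-w) * A / (1 - norm w) \<le> 3 * A"
      using nw z by (simp add: divide_le_eq algebra_simps)
    then show ?thesis using b1 by linarith
  qed
  show ?thesis using summ bound by blast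
qed

end
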